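(* Let $a\in(0,1)$. There exists a constant $c>0$ such that the following holds. Let $G$ be a connected graph on vertex set $[n]$ with maximum degree $\Delta$, set $\varepsilon=n^{-a}$, let $R\sim G(n,\varepsilon/n)$, and let $G^*=G\cup R$. Then asymptotically almost surely $\iota(G^* )\ge \frac{c}{n^{a}\,\Delta^3\log n}$.
   Context: $G(n,p)$ denotes the binomial random graph on vertex set $[n]$ in which each pair is an edge independently with probability $p$. $G\cup R$ is the graph on $[n]$ whose edge set is the union of the edge sets of $G$ and $R$. For a graph $H$ on $V$ and $S\subseteq V$, $N_H(S)$ is the set of vertices in $V\setminus S$ with a neighbor in $S$, and $\iota(H)=\min\{|N_H(U)|/|U| : 0<|U|\le |V|/2\}$. Asymptotically almost surely means with probability tending to $1$ as $n\to\infty$, for an arbitrary sequence of such graphs $G=G_n$. *)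

theory Defs
  imports "HOL-Probability.Probability"
begin

definition all_pairs :: "nat \<Rightarrow> nat set set" where
  "all_pairs n = {e. \<exists>x y. e = {x, y} \<and> x \<noteq> y \<and> x \<in> {1..n} \<and> y \<in> {1..n}}"

definition is_graph_on :: "nat \<Rightarrow> nat set set \<Rightarrow> bool" where
  "is_graph_on n E \<longleftrightarrow> E \<subseteq> all_pairs n"

definition adj_rel :: "nat set set \<Rightarrow> (nat \<times> nat) set" where
  "adj_rel E = {(x, y). {x, y} \<in> E}"

definition connected_graph :: "nat \<Rightarrow> nat set set \<Rightarrow> bool" where
  "connected_graph n E \<longleftrightarrow> is_graph_on n E \<and>
     (\<forall>u\<in>{1..n}. \<forall>v\<in>{1..n}. (u, v) \<in> (adj_rel E)\<^sup>*)"

definition degree :: "nat set set \<Rightarrow> nat \<Rightarrow> nat" where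
  "degree E u = card {v. {u, v} \<in> E \<and> v \<noteq> u}"

definition max_degree :: "nat \<Rightarrow> nat set set \<Rightarrow> nat" where
  "max_degree n E = Max (degree E ` {1..n})"

definition nbhd :: "nat \<Rightarrow> nat set set \<Rightarrow> nat set \<Rightarrow> nat set" where
  "nbhd n E S = {v \<in> {1..n} - S. \<exists>u\<in>S. {u, v} \<in> E}"

definition iota :: "nat \<Rightarrow> nat set set \<Rightarrow> real" where
  "iota n E = Min {real (card (nbhd n E U)) / real (card U) | U.
                     U \<subseteq> {1..n} \<and> 0 < card U \<and> real (card U) \<le> real n / 2}"

definition gnp :: "nat \<Rightarrow> real \<Rightarrow> nat set set pmf" where
  "gnp n p = map_pmf (\<lambda>f. {e \<in> all_pairs n. f e})
               (Pi_pmf (all_pairs n) False (\<lambda>_. bernoulli_pmf p))"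

end

theory Submission
  imports Defs "HOL-Real_Asymp.Real_Asymp"
begin
lemma finite_all_pairs: "finite (all_pairs n)"
proof -
  have "all_pairs n \<subseteq> Pow {1..n}" by (auto simp: all_pairs_def)
  thus ?thesis by (rule finite_subset) auto
qed

lemma prob_noedges:
  assumes F: "F \<subseteq> all_pairs n" and p: "0 \<le> p" "p \<le> 1"
  shows "measure_pmf.prob (gnp n p) {R. \<forall>e\<in>F. e \<notin> R} = (1-p)^card F"
proof -
  have "measure_pmf.prob (gnp n p) {R. \<forall>e\<in>F. e \<notin> R} =
     measure_pmf.prob (Pi_pmf (all_pairs n) False (\<lambda>_. bernoulli_pmf p))
       (Pi (all_pairs n) (\<lambda>e. if e\<in>F then {False} else UNIV))"
    unfolding gnp_def measure_map_pmf
    by (rule arg_cong[where f="measure_pmf.prob _"]) (use F in \<open>auto simp: Pi_def\<close>)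
  also have "\<dots> = (\<Prod>e\<in>all_pairs n. measure_pmf.prob (bernoulli_pmf p) (if e\<in>F then {False} else UNIV))"
    by (rule measure_Pi_pmf_Pi) (rule finite_all_pairs)
  also have "\<dots> = (\<Prod>e\<in>all_pairs n. if e\<in>F then 1-p else 1)"
    by (rule prod.cong) (use p in \<open>auto simp: measure_pmf_single\<close>)
  also have "\<dots> = (\<Prod>e\<in>{e\<in>all_pairs n. e\<in>F}. 1-p)"
    by (rule prod.inter_filter[symmetric]) (rule finite_all_pairs)
  also have "{e\<in>all_pairs n. e\<in>F} = F" using F by auto
  finally show ?thesis by simp
qed


lemma edge_in: assumes "is_graph_on n E" "{u,v} \<in> E" shows "v \<in> {1..n}" "u \<in> {1..n}" "u \<noteq> v"
  using assms unfolding is_graph_on_def all_pairs_def by (auto simp: doubleton_eq_iff)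

lemma exit_nbhd:
  assumes conn: "connected_graph n E" and U: "U \<subseteq> {1..n}" "x \<in> U" "y \<in> {1..n}" "y \<notin> U"
  shows "nbhd n E U \<noteq> {}"
proof -
  have g: "is_graph_on n E" using conn by (simp add: connected_graph_def)
  have path: "(x,y) \<in> (adj_rel E)\<^sup>*" using conn U by (auto simp: connected_graph_def)
  have "z \<in> U \<or> nbhd n E U \<noteq> {}" if "(x,z) \<in> (adj_rel E)\<^sup>*" for z
    using that
  proof (induction rule: rtrancl_induct)
    case base then show ?case using U by simp
  next
    case (step w z)
    then have e: "{w,z} \<in> E" by (simp add: adj_rel_def)
    then have "z \<in> {1..n}" using edge_in[OF g] by blast
    with step e show ?case unfolding nbhd_def by blast
  qed
  from this[OF path] U show ?thesis by blast
qed

definition reach :: "nat \<Rightarrow> nat set set \<Rightarrow> nat set \<Rightarrow> nat set \<Rightarrow> nat set" where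
  "reach n E T A = {v \<in> {1..n} - T. \<exists>a\<in>A. (a,v) \<in> (adj_rel E \<inter> (({1..n}-T) \<times> ({1..n}-T)))\<^sup>*}"

lemma reach_sub: "reach n E T A \<subseteq> {1..n}" by (auto simp: reach_def)

lemma reach_eq:
  assumes conn: "connected_graph n E" and UT: "U \<subseteq> {1..n} - T" and NU: "nbhd n E U \<subseteq> T"
    and t: "t \<in> T" and T: "T \<subseteq> {1..n}"
  shows "U = reach n E T (U \<inter> nbhd n E T)"
proof
  define S where "S = adj_rel E \<inter> (({1..n}-T) \<times> ({1..n}-T))"
  have g: "is_graph_on n E" using conn by (simp add: connected_graph_def)
  show "U \<subseteq> reach n E T (U \<inter> nbhd n E T)"
  proof
    fix x assume x: "x \<in> U"
    have path: "(x,t) \<in> (adj_rel E)\<^sup>*" using conn x UT t T by (auto simp: connected_graph_def)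
    have "x \<in> U \<Longrightarrow> \<exists>a\<in>U \<inter> nbhd n E T. (a,x) \<in> S\<^sup>*" using path
    proof (induction rule: converse_rtrancl_induct)
      case base then show ?case using t UT by auto
    next
      case (step x y)
      then have e: "{x,y} \<in> E" by (simp add: adj_rel_def)
      have yn: "y \<in> {1..n}" using edge_in[OF g e] by blast
      show ?case
      proof (cases "y \<in> T")
        case True
        have "x \<in> nbhd n E T" using True step(4) UT e unfolding nbhd_def
          by (auto simp: insert_commute)
        then show ?thesis using step(4) by blast
      next
        case False
        have "y \<in> U"
        proof (rule ccontr)
          assume "y \<notin> U" 
          then have "y \<in> nbhd n E U" using yn step(4) e unfolding nbhd_def by blast
          then show False using NU False by blast
        qed
        then obtain a where a: "a \<in> U \<inter> nbhd n E T" "(a,y) \<in> S\<^sup>*" using step(3) by blast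
        have "(y,x) \<in> S" using e yn False step(4) UT unfolding S_def adj_rel_def
          by (auto simp: insert_commute)
        then show ?thesis using a by (meson rtrancl_into_rtrancl)
      qed
    qed
    then show "x \<in> reach n E T (U \<inter> nbhd n E T)" using x UT unfolding reach_def S_def by auto
  qed
  show "reach n E T (U \<inter> nbhd n E T) \<subseteq> U"
  proof
    fix v assume "v \<in> reach n E T (U \<inter> nbhd n E T)"
    then obtain a where a: "a \<in> U" "(a,v) \<in> S\<^sup>*" unfolding reach_def S_def by auto
    from a(2) show "v \<in> U"
    proof (induction rule: rtrancl_induct)
      case base then show ?case using a by simp
    next
      case (step y z)
      then have e: "{y,z} \<in> E" and z: "z \<in> {1..n} - T" unfolding S_def adj_rel_def by auto
      show ?case
      proof (rule ccontr)
        assume "z \<notin> U"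
        then have "z \<in> nbhd n E U" using z step(3) e unfolding nbhd_def by blast
        then show False using NU z by blast
      qed
    qed
  qed
qed

lemma card_nbhd_le:
  assumes g: "is_graph_on n E" and T: "T \<subseteq> {1..n}"
  shows "card (nbhd n E T) \<le> max_degree n E * card T"
proof -
  have finT: "finite T" using T finite_subset by blast
  have fin: "finite {v. {t,v} \<in> E \<and> v \<noteq> t}" for t
    by (rule finite_subset[of _ "{1..n}"]) (use edge_in[OF g] in auto)
  have "nbhd n E T \<subseteq> (\<Union>t\<in>T. {v. {t,v} \<in> E \<and> v \<noteq> t})"
    unfolding nbhd_def by auto
  then have "card (nbhd n E T) \<le> card (\<Union>t\<in>T. {v. {t,v} \<in> E \<and> v \<noteq> t})"
    by (rule card_mono[rotated]) (use finT fin in auto)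
  also have "\<dots> \<le> (\<Sum>t\<in>T. card {v. {t,v} \<in> E \<and> v \<noteq> t})"
    by (rule card_UN_le[OF finT])
  also have "\<dots> \<le> (\<Sum>t\<in>T. max_degree n E)"
  proof (rule sum_mono)
    fix t assume "t \<in> T"
    then have "t \<in> {1..n}" using T by auto
    then show "card {v. {t,v} \<in> E \<and> v \<noteq> t} \<le> max_degree n E"
      unfolding max_degree_def degree_def[symmetric] by (intro Max_ge) auto
  qed
  finally show ?thesis by (simp add: mult.commute)
qed

lemma pow_exp: "0 < (x::real) \<Longrightarrow> x ^ m = exp (real m * ln x)"
  by (simp add: exp_of_nat_mult)

lemma term_bound:
  fixes a :: real and n D :: nat and U T :: "nat set"
  assumes n: "n \<ge> 3" and a: "0 < a" and U: "U \<subseteq> {1..n}" and T: "T \<subseteq> {1..n}" and t1: "card T \<ge> 1"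
    and u: "real (card U) \<le> real n / 2"
    and tu: "real (card T) < (1/16) / (real n powr a * real D ^ 3 * ln (real n)) * real (card U)"
  shows "measure_pmf.prob (gnp n (real n powr (-a) / real n)) {R. \<forall>x\<in>U. \<forall>y\<in>{1..n}-U-T. {x,y} \<notin> R}
          \<le> (1 / real n ^ 3) ^ card T / 2 ^ (D * card T)"
proof -
  define p where "p = real n powr (-a) / real n"
  define W where "W = {1..n} - U - T"
  define F where "F = (\<lambda>(x,y). {x,y::nat}) ` (U \<times> W)"
  define u where "u = real (card U)"
  define t where "t = real (card T)"
  define L where "L = ln (real n)"
  have n0: "real n > 0" using n by simp
  have L1: "L \<ge> 1"
  proof -
    have "exp 1 \<le> (3::real)" by (rule exp_le)
    also have "\<dots> \<le> real n" using n by simp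
    finally have "ln (exp 1) \<le> ln (real n)" using n0 by (subst ln_le_cancel_iff) auto
    then show ?thesis by (simp add: L_def)
  qed
  have npa: "real n powr a \<ge> 1" using n a by (intro ge_one_powr_ge_zero) auto
  have t1': "t \<ge> 1" using t1 by (simp add: t_def)
  have D0: "D \<noteq> 0"
  proof
    assume "D = 0"
    then have "t < 0" using tu by (simp add: t_def)
    then show False using t1' by simp
  qed
  then have D1: "real D \<ge> 1" by simp
  have D3: "real D ^ 3 \<ge> real D" "real D ^ 3 \<ge> 1"
    using D1 power_increasing[of 1 3 "real D"] one_le_power[of "real D" 3] by simp_all
  define den where "den = real n powr a * real D ^ 3 * L"
  have den1: "den \<ge> 1"
  proof -
    have "real D ^ 3 * L \<ge> 1" using D3 L1 by (metis mult_mono' one_le_mult_iff order_trans zero_le_one less_le_trans mult_le_cancel_left1 linorder_not_le)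
    then show ?thesis unfolding den_def using npa
      by (metis (no_types, opaque_lifting) mult.assoc mult_mono' mult_1_left order_trans zero_le_one)
  qed
  have tu': "16 * t * den < u" using tu den1 unfolding t_def u_def den_def L_def
    by (simp add: field_simps)
  have tn: "t \<le> real n / 32"
  proof -
    have "16 * t \<le> 16 * t * den" using den1 t1' by simp
    then show ?thesis using tu' u unfolding u_def by simp
  qed
  have cardW: "real (card W) \<ge> real n / 4"
  proof -
    have "W = {1..n} - (U \<union> T)" unfolding W_def by auto
    moreover have "finite (U \<union> T)" using U T finite_subset by blast
    moreover have "U \<union> T \<subseteq> {1..n}" using U T by blast
    ultimately have "card W = n - card (U \<union> T)" by (simp add: card_Diff_subset)
    moreover have "card (U \<union> T) \<le> card U + card T" by (rule card_Un_le)
    moreover have "real (card U + card T) \<le> real n" using u tn unfolding t_def by simp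
    ultimately have "real (card W) \<ge> real n - u - t" unfolding u_def t_def by linarith
    then show ?thesis using u tn unfolding u_def by linarith
  qed
  have inj: "inj_on (\<lambda>(x,y). {x,y::nat}) (U \<times> W)"
    unfolding inj_on_def W_def by (auto simp: doubleton_eq_iff)
  have cardF: "card F = card U * card W"
    unfolding F_def by (simp add: card_image[OF inj] card_cartesian_product)
  have Fsub: "F \<subseteq> all_pairs n" unfolding F_def all_pairs_def W_def using U by fastforce
  have ev: "{R. \<forall>x\<in>U. \<forall>y\<in>{1..n}-U-T. {x,y} \<notin> R} = {R. \<forall>e\<in>F. e \<notin> R}"
    unfolding F_def W_def by auto
  have p0: "p \<ge> 0" unfolding p_def by simp
  have pna: "real n powr (-a) \<le> 1" using npa by (simp add: powr_minus inverse_le_1_iff)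
  have p1: "p \<le> 1" unfolding p_def using pna n by (simp add: divide_le_eq_1 order_trans)
  have "measure_pmf.prob (gnp n (real n powr (-a) / real n)) {R. \<forall>x\<in>U. \<forall>y\<in>{1..n}-U-T. {x,y} \<notin> R}
      = (1 - p) ^ card F" unfolding ev p_def[symmetric] by (rule prob_noedges[OF Fsub p0 p1])
  also have "\<dots> \<le> exp (-p) ^ card F"
    by (rule power_mono) (use p1 exp_ge_add_one_self[of "-p"] in auto)
  also have "\<dots> = exp (- (p * real (card F)))" by (simp add: exp_of_nat_mult[symmetric] mult.commute)
  also have "\<dots> \<le> exp (- (4 * t * real D ^ 3 * L))"
  proof -
    have pn: "p * real n = real n powr (-a)" unfolding p_def using n0 by simp
    have "p * real (card F) = p * u * real (card W)" unfolding cardF u_def by simp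
    also have "\<dots> \<ge> p * u * (real n / 4)" using cardW p0 unfolding u_def by (intro mult_left_mono) auto
    also have "p * u * (real n / 4) = (p * real n) * u / 4" by simp
    finally have 1: "p * real (card F) \<ge> real n powr (-a) * u / 4" unfolding pn .
    have "real n powr (-a) * u / 4 > real n powr (-a) * (16 * t * den) / 4"
      using tu' n by (intro divide_strict_right_mono mult_strict_left_mono) auto
    also have "real n powr (-a) * (16 * t * den) / 4 = 4 * t * real D ^ 3 * L * (real n powr (-a) * real n powr a)"
      unfolding den_def by (simp add: field_simps)
    also have "real n powr (-a) * real n powr a = 1" using n0 by (simp add: powr_add[symmetric])
    finally show ?thesis using 1 by simp
  qed
  also have "\<dots> \<le> (1 / real n ^ 3) ^ card T / 2 ^ (D * card T)"
  proof -
    have "(3 * L + real D * ln 2) \<le> 4 * real D ^ 3 * L"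
    proof -
      have "ln (2::real) \<le> 1" using ln_le_minus_one[of 2] by simp
      then have "real D * ln 2 \<le> real D ^ 3 * L" using D3 L1 D1
        by (intro mult_mono) auto
      moreover have "3 * L \<le> 3 * real D ^ 3 * L" using D3 L1 by simp
      ultimately show ?thesis by simp
    qed
    then have "exp (- (4 * t * real D ^ 3 * L)) \<le> exp (- (t * (3 * L + real D * ln 2)))"
      using t1' by (simp add: mult_left_mono)
    also have "\<dots> = (1 / real n ^ 3) ^ card T / 2 ^ (D * card T)"
    proof -
      have "(1 / real n ^ 3) ^ card T = inverse (real n ^ (3 * card T))"
        by (simp add: power_mult power_one_over divide_inverse power_inverse)
      also have "real n ^ (3 * card T) = exp (real (3 * card T) * ln (real n))"
        using n0 by (rule pow_exp)
      finally have "(1 / real n ^ 3) ^ card T = exp (- (t * 3 * L))"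
        unfolding t_def L_def by (simp add: exp_minus algebra_simps)
      moreover have "(2::real) ^ (D * card T) = exp (t * real D * ln 2)"
        unfolding t_def by (simp add: pow_exp)
      ultimately show ?thesis by (simp add: algebra_simps exp_diff exp_minus divide_inverse)
    qed
    finally show ?thesis .
  qed
  finally show ?thesis .
qed

lemma bad_bound:
  fixes a :: real and n :: nat and E :: "nat set set"
  assumes conn: "connected_graph n E" and n: "n \<ge> 3" and a: "0 < a"
  defines "\<theta> \<equiv> (1/16) / (real n powr a * real (max_degree n E) ^ 3 * ln (real n))"
  shows "measure_pmf.prob (gnp n (real n powr (-a) / real n)) {R. \<not> \<theta> \<le> iota n (E \<union> R)}
           \<le> (1 + 1 / real n ^ 3) ^ n - 1"
proof -
  define D where "D = max_degree n E"
  define P where "P = gnp n (real n powr (-a) / real n)"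
  define X where "X = 1 / real n ^ 3"
  define I where "I = (SIGMA T:(Pow {1..n} - {{}}). Pow (nbhd n E T))"
  define good where "good T A \<longleftrightarrow> reach n E T A \<noteq> {} \<and> real (card (reach n E T A)) \<le> real n / 2
      \<and> real (card T) < \<theta> * real (card (reach n E T A))" for T A
  define Ev where "Ev = (\<lambda>(T,A). {R. good T A \<and> (\<forall>x\<in>reach n E T A. \<forall>y\<in>{1..n}-reach n E T A-T. {x,y} \<notin> R)})"
  have g: "is_graph_on n E" using conn by (simp add: connected_graph_def)
  have finNb: "finite (nbhd n E T)" for T by (rule finite_subset[of _ "{1..n}"]) (auto simp: nbhd_def)
  have finI: "finite I" unfolding I_def by (intro finite_SigmaI) (auto simp: finNb)
  have sub: "{R. \<not> \<theta> \<le> iota n (E \<union> R)} \<subseteq> (\<Union>i\<in>I. Ev i)"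
  proof
    fix R assume "R \<in> {R. \<not> \<theta> \<le> iota n (E \<union> R)}"
    then have lt: "iota n (E \<union> R) < \<theta>" by simp
    define C where "C = {U. U \<subseteq> {1..n} \<and> 0 < card U \<and> real (card U) \<le> real n / 2}"
    define f where "f = (\<lambda>U. real (card (nbhd n (E \<union> R) U)) / real (card U))"
    have S: "{real (card (nbhd n (E \<union> R) U)) / real (card U) | U.
                     U \<subseteq> {1..n} \<and> 0 < card U \<and> real (card U) \<le> real n / 2} = f ` C"
      unfolding f_def C_def by auto
    have finC: "finite C" unfolding C_def by (rule finite_subset[of _ "Pow {1..n}"]) auto
    have "{1} \<in> C" unfolding C_def using n by auto
    then have neC: "f ` C \<noteq> {}" by blast
    have "Min (f ` C) < \<theta>" using lt unfolding iota_def S .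
    then obtain U where U: "U \<in> C" "f U < \<theta>" using Min_less_iff[of "f ` C"] finC neC by auto
    have U1: "U \<subseteq> {1..n}" "0 < card U" "real (card U) \<le> real n / 2" using U(1) unfolding C_def by auto
    define T where "T = nbhd n (E \<union> R) U"
    have tlt: "real (card T) < \<theta> * real (card U)"
      using U(2) U1(2) unfolding f_def T_def by (simp add: divide_less_eq)
    have Tn: "T \<subseteq> {1..n}" unfolding T_def nbhd_def by auto
    have NU: "nbhd n E U \<subseteq> T" unfolding T_def nbhd_def by auto
    have "U \<noteq> {}" using U1(2) by (metis card.empty less_irrefl)
    then obtain x where x: "x \<in> U" by blast
    obtain y where y: "y \<in> {1..n}" "y \<notin> U"
    proof -
      have "\<not> {1..n} \<subseteq> U"
      proof
        assume "{1..n} \<subseteq> U"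
        then have "card {1..n} \<le> card U" using U1 finite_subset by (intro card_mono) auto
        then show False using U1(3) n by simp
      qed
      then show ?thesis using that by blast
    qed
    have "nbhd n E U \<noteq> {}" by (rule exit_nbhd[OF conn U1(1) x y])
    then obtain t where t: "t \<in> T" using NU by blast
    have UT: "U \<subseteq> {1..n} - T" using U1(1) unfolding T_def nbhd_def by auto
    define A where "A = U \<inter> nbhd n E T"
    have Ueq: "U = reach n E T A" unfolding A_def by (rule reach_eq[OF conn UT NU t Tn])
    have "(T,A) \<in> I" unfolding I_def A_def using Tn t by auto
    moreover have "R \<in> Ev (T,A)"
    proof -
      have "good T A" unfolding good_def Ueq[symmetric] using U1 tlt x by auto
      moreover have "\<forall>x\<in>U. \<forall>y\<in>{1..n}-U-T. {x,y} \<notin> R"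
      proof (intro ballI)
        fix x y assume xy: "x \<in> U" "y \<in> {1..n}-U-T"
        show "{x,y} \<notin> R"
        proof
          assume "{x,y} \<in> R"
          then have "y \<in> T" unfolding T_def nbhd_def using xy by blast
          then show False using xy by blast
        qed
      qed
      ultimately show ?thesis using Ueq by (simp add: Ev_def)
    qed
    ultimately show "R \<in> (\<Union>i\<in>I. Ev i)" by blast
  qed
  have "measure_pmf.prob P {R. \<not> \<theta> \<le> iota n (E \<union> R)} \<le> measure_pmf.prob P (\<Union>i\<in>I. Ev i)"
    using sub by (intro measure_pmf.finite_measure_mono) auto
  also have "\<dots> \<le> (\<Sum>i\<in>I. measure_pmf.prob P (Ev i))"
    by (rule measure_pmf.finite_measure_subadditive_finite[OF finI]) auto
  also have "\<dots> = (\<Sum>T\<in>Pow {1..n} - {{}}. \<Sum>A\<in>Pow (nbhd n E T). measure_pmf.prob P (Ev (T,A)))"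
    unfolding I_def by (subst sum.Sigma) (auto simp: finNb case_prod_beta)
  also have "\<dots> \<le> (\<Sum>T\<in>Pow {1..n} - {{}}. X ^ card T)"
  proof (rule sum_mono)
    fix T assume T: "T \<in> Pow {1..n} - {{}}"
    have finN: "finite (nbhd n E T)" by (rule finite_subset[of _ "{1..n}"]) (auto simp: nbhd_def)
    have finT: "finite T" using T finite_subset by blast
    have t1: "card T \<ge> 1" using T finT by (simp add: Suc_le_eq card_gt_0_iff)
    have each: "measure_pmf.prob P (Ev (T,A)) \<le> X ^ card T / 2 ^ (D * card T)" for A
    proof (cases "good T A")
      case False
      then have "Ev (T,A) = {}" unfolding Ev_def by auto
      then show ?thesis unfolding X_def by simp
    next
      case True
      have "Ev (T,A) \<subseteq> {R. \<forall>x\<in>reach n E T A. \<forall>y\<in>{1..n}-reach n E T A-T. {x,y} \<notin> R}"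
        unfolding Ev_def by auto
      then have "measure_pmf.prob P (Ev (T,A)) \<le> measure_pmf.prob P {R. \<forall>x\<in>reach n E T A. \<forall>y\<in>{1..n}-reach n E T A-T. {x,y} \<notin> R}"
        by (intro measure_pmf.finite_measure_mono) auto
      also have "\<dots> \<le> X ^ card T / 2 ^ (D * card T)"
        unfolding P_def X_def
        by (rule term_bound[OF n a reach_sub]) (use True T t1 in \<open>auto simp: good_def \<theta>_def D_def\<close>)
      finally show ?thesis .
    qed
    have "(\<Sum>A\<in>Pow (nbhd n E T). measure_pmf.prob P (Ev (T,A))) \<le> (\<Sum>A\<in>Pow (nbhd n E T). X ^ card T / 2 ^ (D * card T))"
      by (rule sum_mono) (rule each)
    also have "\<dots> = 2 ^ card (nbhd n E T) * (X ^ card T / 2 ^ (D * card T))"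
      using finN by (simp add: card_Pow)
    also have "\<dots> \<le> 2 ^ (D * card T) * (X ^ card T / 2 ^ (D * card T))"
    proof (rule mult_right_mono)
      have "card (nbhd n E T) \<le> D * card T" unfolding D_def
        by (rule card_nbhd_le[OF g]) (use T in auto)
      then show "(2::real) ^ card (nbhd n E T) \<le> 2 ^ (D * card T)" by (rule power_increasing) simp
    qed (simp add: X_def)
    also have "\<dots> = X ^ card T" by simp
    finally show "(\<Sum>A\<in>Pow (nbhd n E T). measure_pmf.prob P (Ev (T,A))) \<le> X ^ card T" .
  qed
  also have "\<dots> = (\<Sum>T\<in>Pow {1..n}. X ^ card T) - 1"
    by (subst sum_diff1) auto
  also have "(\<Sum>T\<in>Pow {1..n}. X ^ card T) = (\<Prod>x\<in>{1..n}. X + 1)"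
    by (subst prod_add) auto
  also have "\<dots> = (1 + X) ^ n" by (simp add: add.commute)
  finally show ?thesis unfolding P_def X_def .
qed

lemma lim_aux: "(\<lambda>n::nat. 2 - exp (1 / real n ^ 2)) \<longlonglongrightarrow> 1"
  by real_asymp

theorem mainTheorem2:
  fixes a :: real
  assumes "0 < a" and "a < 1"
  shows "\<exists>c>0. \<forall>G :: nat \<Rightarrow> nat set set.
    (\<forall>n. connected_graph n (G n)) \<longrightarrow>
    ((\<lambda>n. measure_pmf.prob (gnp n (real n powr (-a) / real n))
        {R. iota n (G n \<union> R) \<ge>
            c / (real n powr a * real (max_degree n (G n)) ^ 3 * ln (real n))})
     \<longlonglongrightarrow> 1)"
proof (intro exI[of _ "1/16::real"] conjI allI impI)
  fix G :: "nat \<Rightarrow> nat set set"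
  assume conn: "\<forall>n. connected_graph n (G n)"
  define q where "q n = measure_pmf.prob (gnp n (real n powr (-a) / real n))
        {R. iota n (G n \<union> R) \<ge>
            (1/16) / (real n powr a * real (max_degree n (G n)) ^ 3 * ln (real n))}" for n
  have low: "q n \<ge> 2 - exp (1 / real n ^ 2)" if n: "n \<ge> 3" for n
  proof -
    let ?th = "(1/16) / (real n powr a * real (max_degree n (G n)) ^ 3 * ln (real n))"
    let ?P = "gnp n (real n powr (-a) / real n)"
    have eq: "{R. iota n (G n \<union> R) \<ge> ?th} = space (measure_pmf ?P) - {R. \<not> ?th \<le> iota n (G n \<union> R)}"
      by auto
    have "q n = 1 - measure_pmf.prob ?P {R. \<not> ?th \<le> iota n (G n \<union> R)}"
      unfolding q_def eq by (rule measure_pmf.prob_compl) auto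
    moreover have "measure_pmf.prob ?P {R. \<not> ?th \<le> iota n (G n \<union> R)} \<le> (1 + 1 / real n ^ 3) ^ n - 1"
      by (rule bad_bound[OF conn[rule_format] n assms(1)])
    moreover have "(1 + 1 / real n ^ 3) ^ n \<le> exp (1 / real n ^ 2)"
    proof -
      have "(1 + 1 / real n ^ 3) ^ n \<le> exp (1 / real n ^ 3) ^ n"
        by (rule power_mono) (use exp_ge_add_one_self[of "1 / real n ^ 3"] in \<open>auto simp: add.commute\<close>)
      also have "\<dots> = exp (real n * (1 / real n ^ 3))" by (rule exp_of_nat_mult[symmetric])
      also have "real n * (1 / real n ^ 3) = 1 / real n ^ 2" using n by (simp add: power2_eq_square power3_eq_cube)
      finally show ?thesis .
    qed
    ultimately show ?thesis by linarith
  qed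
  have up: "q n \<le> 1" for n unfolding q_def by simp
  show "q \<longlonglongrightarrow> 1"
  proof (rule tendsto_sandwich[OF _ _ lim_aux tendsto_const])
    show "\<forall>\<^sub>F n in sequentially. 2 - exp (1 / real n ^ 2) \<le> q n"
      using low by (intro eventually_sequentiallyI[of 3]) auto
    show "\<forall>\<^sub>F n in sequentially. q n \<le> 1" using up by simp
  qed
qed (simp)

end
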